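(* Let $G$ be a finite subset of $\mathbb{N}^2$ that has at least one connected v-bridge. If $G$ contains a connected component $C$ (of the full grid graph of $G$) such that $C\cap(\{r_G\}\times\mathbb{N})\neq\emptyset$, $C\cap(\mathbb{N}\times\{t_G\})\neq\emptyset$ and $C\cap(\mathbb{N}\times\{b_G\})=\emptyset$, then there exists a point $\vec x_{NE}\in G\setminus C$ such that $E(\vec x_{NE})\notin G$, $\vec x_{NE}\in\mathbb{N}\times\{t_G\}$ and $\vec x_{NE}\notin\{r_G\}\times\mathbb{N}$.
   Context: The full grid graph of $V\subseteq\mathbb{Z}^2$ has vertex set $V$ and an edge between $\vec x,\vec y$ iff $\|\vec x-\vec y\|=1$; paths and connected components are taken in this graph. For a finite $S\subseteq\mathbb{Z}^2$ let $l_S=\min_{(x,y)\in S}x$, $r_S=\max_{(x,y)\in S}x$, $b_S=\min_{(x,y)\in S}y$, $t_S=\max_{(x,y)\in S}y$. An h-bridge of $S$ is a subset of $S$ of the form $\{(l_S,y),(r_S,y)\}$; a v-bridge is a subset of $S$ of the form $\{(x,b_S),(x,t_S)\}$. A bridge is connected if there is a simple path in (the full grid graph of) $S$ connecting its two points. Directions: $N(x,y)=(x,y+1)$, $E(x,y)=(x+1,y)$, $S(x,y)=(x,y-1)$, $W(x,y)=(x-1,y)$. *)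

theory Defs
  imports Main
begin

type_synonym pt = "nat \<times> nat"

definition adj :: "pt \<Rightarrow> pt \<Rightarrow> bool" where
  "adj p q \<longleftrightarrow> (fst p = fst q \<and> (snd p = snd q + 1 \<or> snd q = snd p + 1))
              \<or> (snd p = snd q \<and> (fst p = fst q + 1 \<or> fst q = fst p + 1))"

definition lS :: "pt set \<Rightarrow> nat" where "lS S = Min (fst ` S)"
definition rS :: "pt set \<Rightarrow> nat" where "rS S = Max (fst ` S)"
definition bS :: "pt set \<Rightarrow> nat" where "bS S = Min (snd ` S)"
definition tS :: "pt set \<Rightarrow> nat" where "tS S = Max (snd ` S)"

definition simple_path :: "pt set \<Rightarrow> pt list \<Rightarrow> pt \<Rightarrow> pt \<Rightarrow> bool" where
  "simple_path S ps p q \<longleftrightarrow> ps \<noteq> [] \<and> hd ps = p \<and> last ps = q \<and> distinct ps \<and> set ps \<subseteq> S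
     \<and> (\<forall>i. Suc i < length ps \<longrightarrow> adj (ps ! i) (ps ! Suc i))"

definition connected_in :: "pt set \<Rightarrow> pt \<Rightarrow> pt \<Rightarrow> bool" where
  "connected_in S p q \<longleftrightarrow> (\<exists>ps. simple_path S ps p q)"

definition is_component :: "pt set \<Rightarrow> pt set \<Rightarrow> bool" where
  "is_component S C \<longleftrightarrow> (\<exists>p\<in>S. C = {q. connected_in S p q})"

definition v_bridge :: "pt set \<Rightarrow> nat \<Rightarrow> bool" where
  "v_bridge S x \<longleftrightarrow> (x, bS S) \<in> S \<and> (x, tS S) \<in> S"

definition connected_v_bridge :: "pt set \<Rightarrow> nat \<Rightarrow> bool" where
  "connected_v_bridge S x \<longleftrightarrow> v_bridge S x \<and> connected_in S (x, bS S) (x, tS S)"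

definition dirE :: "pt \<Rightarrow> pt" where "dirE p = (fst p + 1, snd p)"

end

theory Submission imports Defs "HOL-Analysis.Analysis" begin

definition iadj :: "int\<times>int \<Rightarrow> int\<times>int \<Rightarrow> bool" where
 "iadj p q \<longleftrightarrow> \<bar>fst p - fst q\<bar> + \<bar>snd p - snd q\<bar> = 1"

definition vv :: "int\<times>int \<Rightarrow> real^2" where
 "vv p = vector [real_of_int (fst p), real_of_int (snd p)]"

lemma vv_comp[simp]: "vv p $ 1 = real_of_int (fst p)" "vv p $ 2 = real_of_int (snd p)"
  by (simp_all add: vv_def)

fun pp :: "(int\<times>int) list \<Rightarrow> real \<Rightarrow> real^2" where
  "pp [] = linepath 0 0"
| "pp [p] = linepath (vv p) (vv p)"
| "pp (p#q#ps) = linepath (vv p) (vv q) +++ pp (q#ps)"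

lemma pp_props: "ps \<noteq> [] \<Longrightarrow> path (pp ps) \<and> pathstart (pp ps) = vv (hd ps) \<and> pathfinish (pp ps) = vv (last ps)"
  by (induction ps rule: pp.induct) auto

lemma pp_image: "ps \<noteq> [] \<Longrightarrow> z \<in> path_image (pp ps) \<Longrightarrow>
   z = vv (hd ps) \<or> (\<exists>i. Suc i < length ps \<and> z \<in> closed_segment (vv (ps!i)) (vv (ps!Suc i)))"
proof (induction ps rule: pp.induct)
  case (3 p q ps)
  have "z \<in> closed_segment (vv p) (vv q) \<or> z \<in> path_image (pp (q#ps))"
    using 3(3) pp_props[of "q#ps"] by (simp add: path_image_join)
  then show ?case
  proof
    assume "z \<in> closed_segment (vv p) (vv q)" then show ?thesis by (intro disjI2 exI[of _ 0]) auto
  next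
    assume "z \<in> path_image (pp (q#ps))"
    from 3(1)[OF _ this] have "z = vv q \<or> (\<exists>i. Suc i < length (q#ps) \<and> z \<in> closed_segment (vv ((q#ps)!i)) (vv ((q#ps)!Suc i)))" by simp
    then show ?thesis
    proof
      assume "z = vv q" then show ?thesis by (intro disjI2 exI[of _ 0]) auto
    next
      assume "\<exists>i. Suc i < length (q#ps) \<and> z \<in> closed_segment (vv ((q#ps)!i)) (vv ((q#ps)!Suc i))"
      then obtain i where "Suc i < length (q#ps)" "z \<in> closed_segment (vv ((q#ps)!i)) (vv ((q#ps)!Suc i))" by blast
      then show ?thesis by (intro disjI2 exI[of _ "Suc i"]) auto
    qed
  qed
qed auto

lemma pp_image_box: "ps \<noteq> [] \<Longrightarrow> \<forall>p\<in>set ps. vv p \<in> cbox a b \<Longrightarrow> path_image (pp ps) \<subseteq> cbox a b"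
proof (induction ps rule: pp.induct)
  case (3 p q ps)
  have "closed_segment (vv p) (vv q) \<subseteq> cbox a b"
    using 3(3) by (intro closed_segment_subset) (auto simp: convex_box)
  then show ?case using 3 pp_props[of "q#ps"] by (simp add: path_image_join)
qed auto

lemma seg_char:
  assumes "z \<in> closed_segment (vv (a1,a2)) (vv (b1,b2))" "iadj (a1,a2) (b1,b2)"
  shows "(a1 = b1 \<and> z$1 = real_of_int a1 \<and> real_of_int (min a2 b2) \<le> z$2 \<and> z$2 \<le> real_of_int (max a2 b2) \<and> \<bar>a2 - b2\<bar> = 1) \<or>
      (a2 = b2 \<and> z$2 = real_of_int a2 \<and> real_of_int (min a1 b1) \<le> z$1 \<and> z$1 \<le> real_of_int (max a1 b1) \<and> \<bar>a1 - b1\<bar> = 1)"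
proof (cases "a1 = b1")
  case True
  then have "\<bar>a2 - b2\<bar> = 1" using assms by (simp add: iadj_def)
  moreover have "z$1 = a1 \<and> (a2 \<le> z$2 \<and> z$2 \<le> b2 \<or> b2 \<le> z$2 \<and> z$2 \<le> a2)"
    using assms segment_vertical[of "vv (a1,a2)" "vv (b1,b2)" z] True by simp
  ultimately show ?thesis using True by (auto simp: min_def max_def)
next
  case False
  then have "\<bar>a1 - b1\<bar> = 1" "a2 = b2" using assms by (auto simp: iadj_def)
  moreover have "z$2 = a2 \<and> (a1 \<le> z$1 \<and> z$1 \<le> b1 \<or> b1 \<le> z$1 \<and> z$1 \<le> a1)"
    using assms segment_horizontal[of "vv (a1,a2)" "vv (b1,b2)" z] \<open>a2 = b2\<close> by simp
  ultimately show ?thesis by (auto simp: min_def max_def)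
qed

lemma seg_meet:
  assumes "iadj p p'" "iadj q q'" "z \<in> closed_segment (vv p) (vv p')" "z \<in> closed_segment (vv q) (vv q')"
  shows "{p,p'} \<inter> {q,q'} \<noteq> {}"
proof -
  obtain p1 p2 p1' p2' q1 q2 q1' q2' where P: "p = (p1,p2)" "p' = (p1',p2')" and Q: "q = (q1,q2)" "q' = (q1',q2')"
    by (cases p, cases p', cases q, cases q') 
  have A: "(p1 = p1' \<and> z$1 = real_of_int p1 \<and> real_of_int (min p2 p2') \<le> z$2 \<and> z$2 \<le> real_of_int (max p2 p2') \<and> \<bar>p2 - p2'\<bar> = 1) \<or>
      (p2 = p2' \<and> z$2 = real_of_int p2 \<and> real_of_int (min p1 p1') \<le> z$1 \<and> z$1 \<le> real_of_int (max p1 p1') \<and> \<bar>p1 - p1'\<bar> = 1)"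
    using seg_char assms(3,1) P by simp
  have B: "(q1 = q1' \<and> z$1 = real_of_int q1 \<and> real_of_int (min q2 q2') \<le> z$2 \<and> z$2 \<le> real_of_int (max q2 q2') \<and> \<bar>q2 - q2'\<bar> = 1) \<or>
      (q2 = q2' \<and> z$2 = real_of_int q2 \<and> real_of_int (min q1 q1') \<le> z$1 \<and> z$1 \<le> real_of_int (max q1 q1') \<and> \<bar>q1 - q1'\<bar> = 1)"
    using seg_char assms(4,2) Q by simp
  have C: "(p1 = p1' \<and> q1 = q1' \<and> p1 = q1 \<and> min p2 p2' \<le> max q2 q2' \<and> min q2 q2' \<le> max p2 p2' \<and> \<bar>p2 - p2'\<bar> = 1 \<and> \<bar>q2 - q2'\<bar> = 1) \<or>
        (p2 = p2' \<and> q2 = q2' \<and> p2 = q2 \<and> min p1 p1' \<le> max q1 q1' \<and> min q1 q1' \<le> max p1 p1' \<and> \<bar>p1 - p1'\<bar> = 1 \<and> \<bar>q1 - q1'\<bar> = 1) \<or>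
        (p1 = p1' \<and> q2 = q2' \<and> min p2 p2' \<le> q2 \<and> q2 \<le> max p2 p2' \<and> min q1 q1' \<le> p1 \<and> p1 \<le> max q1 q1' \<and> \<bar>p2 - p2'\<bar> = 1 \<and> \<bar>q1 - q1'\<bar> = 1) \<or>
        (p2 = p2' \<and> q1 = q1' \<and> min q2 q2' \<le> p2 \<and> p2 \<le> max q2 q2' \<and> min p1 p1' \<le> q1 \<and> q1 \<le> max p1 p1' \<and> \<bar>q2 - q2'\<bar> = 1 \<and> \<bar>p1 - p1'\<bar> = 1)"
  proof -
    have l: "real_of_int a \<le> w \<Longrightarrow> w \<le> real_of_int b \<Longrightarrow> a \<le> b" for a b w by linarith
    show ?thesis using A B
      apply (elim disjE conjE)
      apply (intro disjI1 conjI; (assumption | simp)?; rule l; force)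
      apply (intro disjI2 disjI2 disjI1 conjI; (assumption | simp)?; rule l; force)
      apply (intro disjI2 disjI2 disjI2 conjI; (assumption | simp)?; rule l; force)
      apply (intro disjI2 disjI1 conjI; (assumption | simp)?; rule l; force)
      done
  qed
  show ?thesis using C unfolding P Q by (auto simp: abs_if min_def max_def split: if_splits)
qed

definition ipath :: "(int\<times>int) list \<Rightarrow> bool" where
  "ipath ps \<longleftrightarrow> ps \<noteq> [] \<and> (\<forall>i. Suc i < length ps \<longrightarrow> iadj (ps!i) (ps!Suc i))"

lemma pp_meet:
  assumes "ipath A" "ipath Q" "z \<in> path_image (pp A)" "z \<in> path_image (pp Q)"
    and "length A \<ge> 2" "length Q \<ge> 2"
  shows "set A \<inter> set Q \<noteq> {}"
proof -
  have segA: "\<exists>i. Suc i < length A \<and> z \<in> closed_segment (vv (A!i)) (vv (A!Suc i))"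
  proof -
    have "z = vv (hd A) \<or> (\<exists>i. Suc i < length A \<and> z \<in> closed_segment (vv (A!i)) (vv (A!Suc i)))"
      using pp_image assms(1,3) ipath_def by blast
    then show ?thesis
    proof (elim disjE)
      assume "z = vv (hd A)"
      moreover have "hd A = A!0" using assms(5) hd_conv_nth[of A] by (cases A) auto
      ultimately have "z \<in> closed_segment (vv (A!0)) (vv (A!Suc 0))" by simp
      then show ?thesis using assms(5) by (intro exI[of _ 0]) auto
    qed blast
  qed
  have segQ: "\<exists>i. Suc i < length Q \<and> z \<in> closed_segment (vv (Q!i)) (vv (Q!Suc i))"
  proof -
    have "z = vv (hd Q) \<or> (\<exists>i. Suc i < length Q \<and> z \<in> closed_segment (vv (Q!i)) (vv (Q!Suc i)))"
      using pp_image assms(2,4) ipath_def by blast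
    then show ?thesis
    proof (elim disjE)
      assume "z = vv (hd Q)"
      moreover have "hd Q = Q!0" using assms(6) hd_conv_nth[of Q] by (cases Q) auto
      ultimately have "z \<in> closed_segment (vv (Q!0)) (vv (Q!Suc 0))" by simp
      then show ?thesis using assms(6) by (intro exI[of _ 0]) auto
    qed blast
  qed
  obtain i j where i: "Suc i < length A" "z \<in> closed_segment (vv (A!i)) (vv (A!Suc i))"
    and j: "Suc j < length Q" "z \<in> closed_segment (vv (Q!j)) (vv (Q!Suc j))" using segA segQ by blast
  have "{A!i, A!Suc i} \<inter> {Q!j, Q!Suc j} \<noteq> {}"
    using seg_meet[OF _ _ i(2) j(2)] assms(1,2) i(1) j(1) by (auto simp: ipath_def)
  moreover have "{A!i, A!Suc i} \<subseteq> set A" "{Q!j, Q!Suc j} \<subseteq> set Q" using i(1) j(1) by auto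
  ultimately show ?thesis by blast
qed

lemma grid_fashoda:
  assumes "ipath A" "ipath Q"
    and "\<forall>p\<in>set A \<union> set Q. L \<le> fst p \<and> fst p \<le> R \<and> B \<le> snd p \<and> snd p \<le> T"
    and "fst (hd Q) = L" "fst (last Q) = R" "snd (hd A) = B" "snd (last A) = T"
    and "length A \<ge> 2" "length Q \<ge> 2"
  shows "set A \<inter> set Q \<noteq> {}"
proof -
  let ?a = "vv (L,B)" and ?b = "vv (R,T)"
  have box: "\<forall>p\<in>set A \<union> set Q. vv p \<in> cbox ?a ?b"
    using assms(3) by (auto simp: mem_box_cart forall_2)
  have nA: "A \<noteq> []" and nQ: "Q \<noteq> []" using assms(1,2) by (auto simp: ipath_def)
  obtain z where "z \<in> path_image (pp Q)" "z \<in> path_image (pp A)"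
  proof (rule fashoda[of "pp Q" "pp A" ?a ?b])
    show "path (pp Q)" "path (pp A)" using pp_props nA nQ by auto
    show "path_image (pp Q) \<subseteq> cbox ?a ?b" "path_image (pp A) \<subseteq> cbox ?a ?b"
      using pp_image_box box nA nQ by auto
    show "pathstart (pp Q) $ 1 = ?a $ 1" "pathfinish (pp Q) $ 1 = ?b $ 1"
         "pathstart (pp A) $ 2 = ?a $ 2" "pathfinish (pp A) $ 2 = ?b $ 2"
      using pp_props nA nQ assms(4-7) by auto
  qed
  then show ?thesis using pp_meet assms by blast
qed

lemma ipath_app: "ipath xs \<Longrightarrow> ipath ys \<Longrightarrow> iadj (last xs) (hd ys) \<Longrightarrow> ipath (xs@ys)"
  unfolding ipath_def
proof (intro conjI allI impI)
  fix i assume a: "xs \<noteq> [] \<and> (\<forall>i. Suc i < length xs \<longrightarrow> iadj (xs ! i) (xs ! Suc i))"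
     "ys \<noteq> [] \<and> (\<forall>i. Suc i < length ys \<longrightarrow> iadj (ys ! i) (ys ! Suc i))"
     "iadj (last xs) (hd ys)" and i: "Suc i < length (xs @ ys)"
  show "iadj ((xs @ ys) ! i) ((xs @ ys) ! Suc i)"
  proof (cases "Suc i < length xs")
    case True then show ?thesis using a by (simp add: nth_append)
  next
    case False
    show ?thesis
    proof (cases "Suc i = length xs")
      case True
      then have "i = length xs - 1" by simp
      then show ?thesis using a True by (simp add: nth_append last_conv_nth hd_conv_nth)
    next
      case False
      then have "Suc (i - length xs) < length ys" "i \<ge> length xs" using i \<open>\<not> Suc i < length xs\<close> by auto
      then show ?thesis using a(2) by (simp add: nth_append Suc_diff_le)
    qed
  qed
qed simp

lemma ipath_single: "ipath [p]" by (simp add: ipath_def)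

definition hrow :: "int \<Rightarrow> nat \<Rightarrow> int \<Rightarrow> (int\<times>int) list" where
  "hrow a n y = map (\<lambda>k. (a + int k, y)) [0..<n]"

lemma hrow_ipath: "n \<ge> 1 \<Longrightarrow> ipath (hrow a n y)"
  by (auto simp: ipath_def hrow_def iadj_def)

lemma hrow_hd: "n \<ge> 1 \<Longrightarrow> hd (hrow a n y) = (a, y)"
  by (auto simp: hrow_def hd_map upt_rec)

lemma hrow_last: "n \<ge> 1 \<Longrightarrow> last (hrow a n y) = (a + int n - 1, y)"
  by (auto simp: hrow_def last_map)

lemma hrow_set: "p \<in> set (hrow a n y) \<longleftrightarrow> (\<exists>k<n. p = (a + int k, y))"
  by (auto simp: hrow_def)

definition ii :: "nat\<times>nat \<Rightarrow> int\<times>int" where "ii p = (int (fst p), int (snd p))"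

lemma adj_iadj: "adj p q \<Longrightarrow> iadj (ii p) (ii q)"
  by (auto simp: adj_def iadj_def ii_def)

lemma sp_ipath: "Defs.simple_path S ps p q \<Longrightarrow> ipath (map ii ps)"
  by (auto simp: Defs.simple_path_def ipath_def adj_iadj)

definition EG :: "pt set \<Rightarrow> (pt \<times> pt) set" where
  "EG S = {(a,b). a \<in> S \<and> b \<in> S \<and> adj a b}"

lemma sym_EG: "sym ((EG S)\<^sup>*)"
  by (intro sym_rtrancl) (auto simp: sym_def EG_def adj_def)

lemma sp_reach: "Defs.simple_path S ps p q \<Longrightarrow> k < length ps \<Longrightarrow> (p, ps!k) \<in> (EG S)\<^sup>*"
proof (induction k)
  case 0 then show ?case by (cases ps) (auto simp: Defs.simple_path_def)
next
  case (Suc k)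
  then have "(p, ps!k) \<in> (EG S)\<^sup>*" by simp
  moreover have "(ps!k, ps!Suc k) \<in> EG S" using Suc.prems
    by (auto simp: Defs.simple_path_def EG_def)
  ultimately show ?case by simp
qed

lemma sp_reach_set: "Defs.simple_path S ps p q \<Longrightarrow> v \<in> set ps \<Longrightarrow> (p, v) \<in> (EG S)\<^sup>*"
  by (metis in_set_conv_nth sp_reach)

lemma reach_sp: "(p,q) \<in> (EG S)\<^sup>* \<Longrightarrow> p \<in> S \<Longrightarrow> \<exists>ps. Defs.simple_path S ps p q"
proof (induction rule: rtrancl_induct)
  case base then show ?case by (intro exI[of _ "[p]"]) (simp add: Defs.simple_path_def)
next
  case (step q w)
  then obtain ps where ps: "Defs.simple_path S ps p q" by blast
  have w: "w \<in> S" "adj q w" using step(2) by (auto simp: EG_def)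
  show ?case
  proof (cases "w \<in> set ps")
    case True
    then obtain k where k: "k < length ps" "ps!k = w" by (metis in_set_conv_nth)
    have l: "last (take (Suc k) ps) = w"
    proof -
      have "take (Suc k) ps \<noteq> []" using k by (cases ps) auto
      then have "last (take (Suc k) ps) = take (Suc k) ps ! k" using k by (simp add: last_conv_nth)
      then show ?thesis using k by simp
    qed
    have h: "hd (take (Suc k) ps) = p" using ps k by (cases ps) (auto simp: Defs.simple_path_def)
    have "Defs.simple_path S (take (Suc k) ps) p w"
      using ps k l h unfolding Defs.simple_path_def
      by (auto dest: in_set_takeD)
    then show ?thesis by blast
  next
    case False
    have "Defs.simple_path S (ps @ [w]) p w"
      using ps w False unfolding Defs.simple_path_def
    proof (intro conjI allI impI)
      fix i assume a: "ps \<noteq> [] \<and> hd ps = p \<and> last ps = q \<and> distinct ps \<and> set ps \<subseteq> S \<and> (\<forall>i. Suc i < length ps \<longrightarrow> adj (ps ! i) (ps ! Suc i))"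
        and i: "Suc i < length (ps @ [w])"
      show "adj ((ps @ [w]) ! i) ((ps @ [w]) ! Suc i)"
      proof (cases "Suc i < length ps")
        case True then show ?thesis using a by (simp add: nth_append)
      next
        case False
        then have "Suc i = length ps" using i by simp
        then have "ps ! i = q" using a by (metis diff_Suc_1 last_conv_nth)
        then show ?thesis using a w \<open>Suc i = length ps\<close> by (simp add: nth_append)
      qed
    qed auto
    then show ?thesis by blast
  qed
qed

lemma conn_iff: "connected_in S p q \<longleftrightarrow> p \<in> S \<and> (p,q) \<in> (EG S)\<^sup>*"
proof
  assume "connected_in S p q"
  then obtain ps where ps: "Defs.simple_path S ps p q" by (auto simp: connected_in_def)
  then have "p \<in> S" by (auto simp: Defs.simple_path_def)
  moreover have "(p, q) \<in> (EG S)\<^sup>*" using sp_reach[OF ps, of "length ps - 1"] ps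
    by (auto simp: Defs.simple_path_def last_conv_nth)
  ultimately show "p \<in> S \<and> (p,q) \<in> (EG S)\<^sup>*" by blast
next
  assume "p \<in> S \<and> (p,q) \<in> (EG S)\<^sup>*"
  then show "connected_in S p q" using reach_sp by (auto simp: connected_in_def)
qed

lemma reach_in: "(p,q) \<in> (EG S)\<^sup>* \<Longrightarrow> p \<in> S \<Longrightarrow> q \<in> S"
  by (induction rule: rtrancl_induct) (auto simp: EG_def)

lemma Gbounds:
  assumes "finite G" "p \<in> G"
  shows "lS G \<le> fst p \<and> fst p \<le> rS G \<and> bS G \<le> snd p \<and> snd p \<le> tS G"
  using assms by (auto simp: lS_def rS_def bS_def tS_def intro!: Min_le Max_ge)

lemma ii_inj: "ii p = ii q \<longleftrightarrow> p = q"
  by (cases p, cases q) (auto simp: ii_def)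

lemma ii_fst[simp]: "fst (ii p) = int (fst p)" and ii_snd[simp]: "snd (ii p) = int (snd p)"
  by (simp_all add: ii_def)

theorem mainTheorem4:
  fixes G C :: "(nat \<times> nat) set"
  assumes "finite G"
    and "\<exists>x. connected_v_bridge G x"
    and "is_component G C"
    and "C \<inter> ({rS G} \<times> UNIV) \<noteq> {}"
    and "C \<inter> (UNIV \<times> {tS G}) \<noteq> {}"
    and "C \<inter> (UNIV \<times> {bS G}) = {}"
  shows "\<exists>xNE \<in> G - C. dirE xNE \<notin> G \<and> xNE \<in> UNIV \<times> {tS G} \<and> xNE \<notin> {rS G} \<times> UNIV"
proof -
  define l where "l = lS G"
  define r where "r = rS G"
  define b where "b = bS G"
  define t where "t = tS G"
  let ?E = "(EG G)\<^sup>*"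
  have bnd: "\<And>p. p \<in> G \<Longrightarrow> l \<le> fst p \<and> fst p \<le> r \<and> b \<le> snd p \<and> snd p \<le> t"
    using Gbounds[OF assms(1)] unfolding l_def r_def b_def t_def by blast
  obtain x where xv: "connected_v_bridge G x" using assms(2) by blast
  have Gxb: "(x,b) \<in> G" and Gxt: "(x,t) \<in> G" and cxt: "connected_in G (x,b) (x,t)"
    using xv unfolding connected_v_bridge_def v_bridge_def b_def t_def by auto
  obtain P where P: "Defs.simple_path G P (x,b) (x,t)" using cxt by (auto simp: connected_in_def)
  obtain p0 where p0: "p0 \<in> G" "C = {q. connected_in G p0 q}" using assms(3) by (auto simp: is_component_def)
  have Cm: "\<And>q. q \<in> C \<longleftrightarrow> (p0,q) \<in> ?E" using p0 by (auto simp: conn_iff)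
  have clos1: "\<And>u w. u \<in> C \<Longrightarrow> (u,w) \<in> ?E \<Longrightarrow> w \<in> C" using Cm by (meson rtrancl_trans)
  have clos2: "\<And>u w. u \<in> C \<Longrightarrow> (w,u) \<in> ?E \<Longrightarrow> w \<in> C"
    using clos1 sym_EG by (meson symD)
  have CG: "C \<subseteq> G" using Cm reach_in p0(1) by blast
  have bnot: "(x,b) \<notin> C" using assms(6) unfolding b_def by blast
  have Dnot: "\<And>w. ((x,b),w) \<in> ?E \<Longrightarrow> w \<notin> C" using clos2 bnot by blast
  have xbt: "((x,b),(x,t)) \<in> ?E" using cxt by (simp add: conn_iff)
  have xr: "x \<le> r" using bnd[OF Gxt] by simp
  show ?thesis
  proof (cases "\<forall>j. x \<le> j \<and> j \<le> r \<longrightarrow> (j,t) \<in> G")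
    case False
    then obtain j where j: "x \<le> j \<and> j \<le> r \<and> (j,t) \<notin> G" by blast
    define m where "m = (LEAST j. x \<le> j \<and> j \<le> r \<and> (j,t) \<notin> G)"
    have m: "x \<le> m" "m \<le> r" "(m,t) \<notin> G" using LeastI[of "\<lambda>j. x \<le> j \<and> j \<le> r \<and> (j,t) \<notin> G", OF j]
      unfolding m_def by auto
    have mlt: "\<And>i. i < m \<Longrightarrow> \<not> (x \<le> i \<and> i \<le> r \<and> (i,t) \<notin> G)"
      unfolding m_def by (rule not_less_Least)
    have xm: "x < m" using m Gxt by (cases "x = m") auto
    have run: "\<And>k. x + k < m \<Longrightarrow> ((x,t),(x+k,t)) \<in> ?E"
    proof -
      fix k show "x + k < m \<Longrightarrow> ((x,t),(x+k,t)) \<in> ?E"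
      proof (induction k)
        case (Suc k)
        have "(x+k,t) \<in> G" "(x + Suc k, t) \<in> G" using mlt[of "x+k"] mlt[of "x+Suc k"] Suc.prems m by auto
        then have "((x+k,t),(x+Suc k,t)) \<in> EG G" by (auto simp: EG_def adj_def)
        moreover have "((x,t),(x+k,t)) \<in> ?E" using Suc by simp
        ultimately show ?case by (meson rtrancl.rtrancl_into_rtrancl)
      qed simp
    qed
    have r1: "((x,t),(m-1,t)) \<in> ?E" using run[of "m - 1 - x"] xm by simp
    have inG: "(m-1,t) \<in> G" using mlt[of "m-1"] xm m by auto
    have notC: "(m-1,t) \<notin> C" using Dnot r1 xbt by (meson rtrancl_trans)
    show ?thesis
    proof (rule bexI[of _ "(m-1,t)"])
      show "(m-1,t) \<in> G - C" using inG notC by blast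
      show "dirE (m - 1, t) \<notin> G \<and> (m - 1, t) \<in> UNIV \<times> {tS G} \<and> (m - 1, t) \<notin> {rS G} \<times> UNIV"
        using m xm unfolding dirE_def t_def[symmetric] r_def[symmetric] by auto
    qed
  next
    case True
    have run: "\<And>k. x + k \<le> r \<Longrightarrow> ((x,t),(x+k,t)) \<in> ?E"
    proof -
      fix k show "x + k \<le> r \<Longrightarrow> ((x,t),(x+k,t)) \<in> ?E"
      proof (induction k)
        case (Suc k)
        have "(x+k,t) \<in> G" "(x + Suc k, t) \<in> G" using True Suc.prems by auto
        then have "((x+k,t),(x+Suc k,t)) \<in> EG G" by (auto simp: EG_def adj_def)
        moreover have "((x,t),(x+k,t)) \<in> ?E" using Suc by simp
        ultimately show ?case by (meson rtrancl.rtrancl_into_rtrancl)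
      qed simp
    qed
    have runnot: "\<And>j. x \<le> j \<Longrightarrow> j \<le> r \<Longrightarrow> (j,t) \<notin> C"
    proof -
      fix j assume "x \<le> j" "j \<le> r"
      then have "((x,t),(j,t)) \<in> ?E" using run[of "j - x"] by simp
      then show "(j,t) \<notin> C" using Dnot xbt by (meson rtrancl_trans)
    qed
    obtain c where c: "(c,t) \<in> C" using assms(5) unfolding t_def by blast
    obtain y' where y': "(r,y') \<in> C" using assms(4) unfolding r_def by blast
    have cx: "c < x" using runnot[of c] c bnd[of "(c,t)"] CG by force
    have lc: "l \<le> c" using c bnd[of "(c,t)"] CG by force
    have yt: "y' < t"
    proof -
      have "y' \<le> t" using y' bnd[of "(r,y')"] CG by auto
      moreover have "y' \<noteq> t" using runnot[of r] y' xr by auto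
      ultimately show ?thesis by simp
    qed
    have yb: "b < y'" using y' bnd[of "(r,y')"] CG assms(6) unfolding b_def by force
    have "((c,t),(r,y')) \<in> ?E"
    proof -
      have "((c,t),p0) \<in> ?E" using c Cm sym_EG by (meson symD)
      moreover have "(p0,(r,y')) \<in> ?E" using y' Cm by blast
      ultimately show ?thesis by (meson rtrancl_trans)
    qed
    then obtain Q0 where Q0: "Defs.simple_path G Q0 (c,t) (r,y')" using reach_sp c CG by blast
    have Q0C: "set Q0 \<subseteq> C" using sp_reach_set[OF Q0] clos1 c by blast
    have PnC: "set P \<inter> C = {}" using sp_reach_set[OF P] Dnot by blast
    have PG: "set P \<subseteq> G" and Q0G: "set Q0 \<subseteq> G" using P Q0 by (auto simp: Defs.simple_path_def)
    have Pne: "P \<noteq> []" and Q0ne: "Q0 \<noteq> []" using P Q0 by (auto simp: Defs.simple_path_def)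
    have Phd: "hd (map ii P) = (int x, int b)" and Plast: "last (map ii P) = (int x, int t)"
      using P Pne by (auto simp: Defs.simple_path_def hd_map last_map ii_def)
    have Qhd: "hd (map ii Q0) = (int c, int t)" and Qlast: "last (map ii Q0) = (int r, int y')"
      using Q0 Q0ne by (auto simp: Defs.simple_path_def hd_map last_map ii_def)
    define T1 where "T1 = [(int r, int t + 1), (int r, int t + 2)]"
    define T2 where "T2 = hrow (int x + 1) (r - x) (int t) @ T1"
    define T3 where "T3 = map ii P @ T2"
    define A where "A = (int x, int b - 1) # T3"
    define Qp where "Qp = hrow (int l - 1) (c - l + 2) (int t + 1)"
    define Q where "Q = Qp @ (map ii Q0 @ [(int r + 1, int y')])"
    have T1p: "ipath T1" by (simp add: T1_def ipath_def iadj_def)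
    have T2p: "ipath T2 \<and> hd T2 = (if r = x then (int r, int t + 1) else (int x + 1, int t))"
    proof (cases "r = x")
      case True then show ?thesis using T1p by (simp add: T2_def hrow_def T1_def)
    next
      case False
      then have "ipath T2" unfolding T2_def using T1p xr
        by (intro ipath_app hrow_ipath) (auto simp: hrow_last T1_def iadj_def)
      moreover have "hrow (int x + 1) (r - x) (int t) \<noteq> []" using False xr by (simp add: hrow_def)
      ultimately show ?thesis using False xr by (simp add: T2_def hrow_hd hd_append)
    qed
    have T3p: "ipath T3" unfolding T3_def
      using T2p sp_ipath[OF P] Plast by (intro ipath_app) (auto simp: iadj_def)
    have Ap: "ipath A" unfolding A_def using ipath_app[OF ipath_single T3p, of "(int x, int b - 1)"]
      T3_def Phd Pne by (simp add: iadj_def)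
    have Qp_p: "ipath Qp" unfolding Qp_def by (rule hrow_ipath) simp
    have Qt: "ipath (map ii Q0 @ [(int r + 1, int y')])"
      using sp_ipath[OF Q0] Qlast by (intro ipath_app ipath_single) (auto simp: iadj_def)
    have Qpl: "last Qp = (int c, int t + 1)" using lc by (simp add: Qp_def hrow_last)
    have Qpath: "ipath Q" unfolding Q_def
      using Qp_p Qt Qpl Qhd Q0ne by (rule_tac ipath_app) (auto simp: iadj_def hd_append)
    have Ahd: "snd (hd A) = int b - 1" by (simp add: A_def)
    have Alast: "snd (last A) = int t + 2" by (simp add: A_def T3_def T2_def T1_def)
    have Qhd': "fst (hd Q) = int l - 1" by (simp add: Q_def Qp_def hrow_def upt_rec)
    have Qlast': "fst (last Q) = int r + 1" by (simp add: Q_def)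
    have lenA: "length A \<ge> 2" by (simp add: A_def T3_def T2_def T1_def)
    have lenQ: "length Q \<ge> 2" using Q0ne by (simp add: Q_def Suc_leI)
    have setA: "\<And>p. p \<in> set A \<Longrightarrow> p = (int x, int b - 1) \<or> p \<in> ii ` (G - C) \<or> p = (int r, int t + 1) \<or> p = (int r, int t + 2)"
    proof -
      fix p assume "p \<in> set A"
      then consider "p = (int x, int b - 1)" | "p \<in> ii ` set P" | "p \<in> set (hrow (int x + 1) (r - x) (int t))"
        | "p = (int r, int t + 1)" | "p = (int r, int t + 2)"
        unfolding A_def T3_def T2_def T1_def by auto
      then show "p = (int x, int b - 1) \<or> p \<in> ii ` (G - C) \<or> p = (int r, int t + 1) \<or> p = (int r, int t + 2)"
      proof cases
        case 2 then show ?thesis using PnC PG by blast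
      next
        case 3
        then obtain k where k: "k < r - x" "p = (int x + 1 + int k, int t)" by (auto simp: hrow_set)
        then have "p = ii (x + 1 + k, t)" by (simp add: ii_def)
        moreover have "(x+1+k, t) \<in> G - C" using True runnot[of "x+1+k"] k by auto
        ultimately show ?thesis by blast
      qed auto
    qed
    have setQ: "\<And>p. p \<in> set Q \<Longrightarrow> p \<in> ii ` C \<or> (snd p = int t + 1 \<and> int l - 1 \<le> fst p \<and> fst p \<le> int c) \<or> p = (int r + 1, int y')"
    proof -
      fix p assume "p \<in> set Q"
      then consider "p \<in> set Qp" | "p \<in> ii ` set Q0" | "p = (int r + 1, int y')"
        unfolding Q_def by auto
      then show "p \<in> ii ` C \<or> (snd p = int t + 1 \<and> int l - 1 \<le> fst p \<and> fst p \<le> int c) \<or> p = (int r + 1, int y')"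
      proof cases
        case 1
        then obtain k where "k < c - l + 2" "p = (int l - 1 + int k, int t + 1)" by (auto simp: Qp_def hrow_set)
        then show ?thesis using lc by auto
      next
        case 2 then show ?thesis using Q0C by blast
      qed auto
    qed
    have disj: "set A \<inter> set Q = {}"
    proof (rule ccontr)
      assume "set A \<inter> set Q \<noteq> {}"
      then obtain p where pA: "p \<in> set A" and pQ: "p \<in> set Q" by blast
      have bt: "b \<le> t" using bnd[OF Gxb] by simp
      have nA: "\<forall>u\<in>C. ii u \<noteq> p" if "p \<in> ii ` (G - C)"
      proof
        fix u assume u: "u \<in> C"
        from that obtain w where w: "w \<in> G - C" "p = ii w" by blast
        show "ii u \<noteq> p" using w u ii_inj[of u w] by auto
      qed
      have gA: "fst p \<le> int r \<and> snd p \<le> int t" if "p \<in> ii ` (G - C)"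
      proof -
        from that obtain w where w: "w \<in> G" "p = ii w" by blast
        then show ?thesis using bnd[OF w(1)] by simp
      qed
      have gQ: "snd p \<le> int t \<and> int b \<le> snd p" if "p \<in> ii ` C"
      proof -
        from that obtain w where w: "w \<in> G" "p = ii w" using CG by blast
        then show ?thesis using bnd[OF w(1)] by simp
      qed
      obtain p1 p2 where pp: "p = (p1,p2)" by (cases p)
      have A': "(p1 = int x \<and> p2 = int b - 1) \<or> (p1 \<le> int r \<and> p2 \<le> int t \<and> p \<notin> ii ` C) \<or> (p1 = int r \<and> p2 = int t + 1) \<or> (p1 = int r \<and> p2 = int t + 2)"
      proof -
        have "p \<in> ii ` (G - C) \<Longrightarrow> p \<notin> ii ` C"
        proof
          assume a: "p \<in> ii ` (G - C)" and b: "p \<in> ii ` C"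
          from b obtain u where "u \<in> C" "p = ii u" by blast
          then show False using nA[OF a] by blast
        qed
        then show ?thesis using setA[OF pA] gA pp by auto
      qed
      have Q': "(p \<in> ii ` C \<and> p2 \<le> int t \<and> int b \<le> p2) \<or> (p2 = int t + 1 \<and> p1 \<le> int c) \<or> (p1 = int r + 1 \<and> p2 = int y')"
        using setQ[OF pQ] gQ pp by auto
      show False using A' Q' cx xr yb bt by auto
    qed
    have box: "\<forall>p\<in>set A \<union> set Q. int l - 1 \<le> fst p \<and> fst p \<le> int r + 1 \<and> int b - 1 \<le> snd p \<and> snd p \<le> int t + 2"
    proof
      fix p assume "p \<in> set A \<union> set Q"
      then show "int l - 1 \<le> fst p \<and> fst p \<le> int r + 1 \<and> int b - 1 \<le> snd p \<and> snd p \<le> int t + 2"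
      proof
        assume "p \<in> set A"
        from setA[OF this] show ?thesis
        proof (elim disjE)
          assume "p \<in> ii ` (G - C)" then show ?thesis using bnd by force
        qed (use bnd[OF Gxb] bnd[OF Gxt] in auto)
      next
        assume "p \<in> set Q"
        from setQ[OF this] show ?thesis
        proof (elim disjE)
          assume "p \<in> ii ` C" then show ?thesis using bnd CG by force
        qed (use cx xr yb yt lc in auto)
      qed
    qed
    have "set A \<inter> set Q \<noteq> {}"
      by (rule grid_fashoda[OF Ap Qpath box Qhd' Qlast' Ahd Alast lenA lenQ])
    with disj show ?thesis by blast
  qed
qed
end
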